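(* Let $\Delta\ge3$. For every graph $G$ with maximum degree at most $\Delta$, the total Thue choice number of $G$ is at most $17.9856\,\Delta^2$; that is, for every assignment $L$ of a list $L(x)$ of colours to each $x\in V(G)\cup E(G)$ with $|L(x)|\ge 17.9856\,\Delta^2$ for all $x$, there exists a total Thue colouring $\varphi$ of $G$ with $\varphi(x)\in L(x)$ for all $x\in V(G)\cup E(G)$.
   Context: Graphs are finite and simple. A sequence is nonrepetitive if no block of consecutive terms has the form $r_1\dots r_nr_1\dots r_n$ with $n\ge1$. A (strong) total Thue colouring of $G$ is a colouring of $V(G)\cup E(G)$ such that for every path $v_1,e_1,v_2,\dots,e_{k-1},v_k$ in $G$ the sequence of colours of $v_1,e_1,\dots,v_k$ is nonrepetitive, the sequence of colours of $v_1,\dots,v_k$ is nonrepetitive, and the sequence of colours of $e_1,\dots,e_{k-1}$ is nonrepetitive. $G$ is nonrepetitively total $l$-choosable if for every list assignment $L:V(G)\cup E(G)\to 2^{\mathbb N}$ with all lists of size at least $l$ there is a total Thue colouring choosing each colour from the associated list; the total Thue choice number is the minimum such $l$. *)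

theory Defs
  imports Main Complex_Main
begin

definition simple_graph :: "'a set \<Rightarrow> 'a set set \<Rightarrow> bool" where
  "simple_graph V E \<longleftrightarrow> finite V \<and>
     (\<forall>e\<in>E. \<exists>u v. u \<in> V \<and> v \<in> V \<and> u \<noteq> v \<and> e = {u, v})"

definition max_degree_le :: "'a set \<Rightarrow> 'a set set \<Rightarrow> nat \<Rightarrow> bool" where
  "max_degree_le V E d \<longleftrightarrow> (\<forall>v\<in>V. card {e\<in>E. v \<in> e} \<le> d)"

definition nonrep :: "'b list \<Rightarrow> bool" where
  "nonrep xs \<longleftrightarrow> \<not> (\<exists>a r b. r \<noteq> [] \<and> xs = a @ r @ r @ b)"

definition is_path :: "'a set \<Rightarrow> 'a set set \<Rightarrow> 'a list \<Rightarrow> bool" where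
  "is_path V E ps \<longleftrightarrow> ps \<noteq> [] \<and> distinct ps \<and> set ps \<subseteq> V \<and>
     (\<forall>i. Suc i < length ps \<longrightarrow> {ps ! i, ps ! Suc i} \<in> E)"

fun path_edges :: "'a list \<Rightarrow> 'a set list" where
  "path_edges (v # w # rest) = {v, w} # path_edges (w # rest)"
| "path_edges _ = []"

text \<open>Colours of v_1, e_1, v_2, ..., e_{k-1}, v_k; elements of V(G) \<union> E(G) are
  represented as the disjoint sum: Inl v for vertices, Inr e for edges.\<close>
fun total_seq :: "('a + 'a set \<Rightarrow> 'c) \<Rightarrow> 'a list \<Rightarrow> 'c list" where
  "total_seq c (v # w # rest) = c (Inl v) # c (Inr {v, w}) # total_seq c (w # rest)"
| "total_seq c [v] = [c (Inl v)]"
| "total_seq c [] = []"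

definition total_thue :: "'a set \<Rightarrow> 'a set set \<Rightarrow> ('a + 'a set \<Rightarrow> 'c) \<Rightarrow> bool" where
  "total_thue V E c \<longleftrightarrow> (\<forall>ps. is_path V E ps \<longrightarrow>
      nonrep (total_seq c ps) \<and>
      nonrep (map (\<lambda>v. c (Inl v)) ps) \<and>
      nonrep (map (\<lambda>e. c (Inr e)) (path_edges ps)))"

definition elems :: "'a set \<Rightarrow> 'a set set \<Rightarrow> ('a + 'a set) set" where
  "elems V E = Inl ` V \<union> Inr ` E"

end

theory Submission
  imports Defs "HOL-Library.FuncSet"
begin

definition goodc :: "('e list \<times> 'e list) set \<Rightarrow> 'e set \<Rightarrow> ('e \<Rightarrow> 'c) \<Rightarrow> bool" where
  "goodc Q H f \<longleftrightarrow> (\<forall>(A,B)\<in>Q. set A \<subseteq> H \<longrightarrow> set B \<subseteq> H \<longrightarrow> map f A \<noteq> map f B)"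

definition Col :: "('e list \<times> 'e list) set \<Rightarrow> ('e \<Rightarrow> 'c set) \<Rightarrow> 'e set \<Rightarrow> ('e \<Rightarrow> 'c) set" where
  "Col Q Lf H = {f \<in> PiE H Lf. goodc Q H f}"

definition Qx :: "('e list \<times> 'e list) set \<Rightarrow> 'e set \<Rightarrow> 'e \<Rightarrow> ('e list \<times> 'e list) set" where
  "Qx Q X x = {q\<in>Q. set (fst q) \<subseteq> X \<and> set (snd q) \<subseteq> X \<and> x \<in> set (fst q) \<union> set (snd q)}"

lemma good_mono:
  assumes "goodc Q H f" "H' \<subseteq> H" "\<forall>y\<in>H'. g y = f y"
  shows "goodc Q H' g"
proof -
  have *: "map g A = map f A" if "set A \<subseteq> H'" for A
    using that assms(3) by (induction A) auto
  show ?thesis unfolding goodc_def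
  proof (intro ballI, clarify)
    fix A B assume q: "(A, B) \<in> Q" "set A \<subseteq> H'" "set B \<subseteq> H'" "map g A = map g B"
    then have "map f A = map f B" using * by metis
    moreover have "set A \<subseteq> H" "set B \<subseteq> H" using q assms(2) by auto
    ultimately show False using assms(1) q(1) unfolding goodc_def by blast
  qed
qed

lemma finite_Col:
  assumes "finite H" "\<forall>x\<in>H. finite (Lf x)"
  shows "finite (Col Q Lf H)"
  unfolding Col_def using finite_PiE[OF assms(1), of Lf] assms(2) by auto

lemma chain:
  fixes \<beta> :: real
  assumes hyp: "\<And>H' x. H' \<subseteq> G \<Longrightarrow> x \<in> H' \<Longrightarrow> \<beta> * card (Col Q Lf (H' - {x})) \<le> card (Col Q Lf H')"
    and "finite T" "T \<subseteq> G" "\<beta> \<ge> 0"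
  shows "\<beta> ^ card T * card (Col Q Lf (G - T)) \<le> card (Col Q Lf G)"
  using assms(2,3)
proof (induction T rule: finite_induct)
  case empty
  then show ?case by simp
next
  case (insert t T)
  have e: "G - insert t T = (G - T) - {t}" by auto
  have "\<beta> * card (Col Q Lf ((G - T) - {t})) \<le> card (Col Q Lf (G - T))"
    using hyp[of "G - T" t] insert by auto
  then have "\<beta> ^ card T * (\<beta> * card (Col Q Lf ((G - T) - {t}))) \<le> \<beta> ^ card T * card (Col Q Lf (G - T))"
    by (simp add: assms(4) mult_left_mono)
  also have "\<dots> \<le> card (Col Q Lf G)" using insert by auto
  finally show ?case using insert e by (simp add: mult.left_commute)
qed

lemma determ:
  assumes "g \<in> PiE H Lf" "g' \<in> PiE H Lf" "map g A = map g B" "map g' A = map g' B"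
    "length A = length B" "set A \<inter> set B = {}" "set A \<subseteq> H" "set B \<subseteq> H"
    "restrict g (H - set B) = restrict g' (H - set B)"
  shows "g = g'"
proof
  fix y
  show "g y = g' y"
  proof (cases "y \<in> H")
    case False
    then show ?thesis using assms(1,2) by (auto simp: PiE_def extensional_def)
  next
    case True
    show ?thesis
    proof (cases "y \<in> set B")
      case False
      then have "y \<in> H - set B" using True by auto
      then show ?thesis using assms(9) by (metis restrict_apply')
    next
      case yB: True
      then obtain i where i: "i < length B" "B ! i = y" by (metis in_set_conv_nth)
      have ia: "i < length A" using i assms(5) by simp
      have "A ! i \<in> set A" using ia by simp
      then have aH: "A ! i \<in> H - set B" using assms(6,7) by auto
      have "g y = g (A ! i)" using assms(3) i ia by (metis nth_map)
      also have "\<dots> = g' (A ! i)" using assms(9) aH by (metis restrict_apply')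
      also have "\<dots> = g' y" using assms(4) i ia by (metis nth_map)
      finally show ?thesis .
    qed
  qed
qed

lemma Col_empty: 
  assumes "\<forall>(A,B)\<in>Q. A \<noteq> []"
  shows "Col Q Lf {} = {\<lambda>_. undefined}"
  using assms unfolding Col_def goodc_def by (auto simp: PiE_empty_domain)

lemma card_set_distinct_minus:
  assumes "distinct B" "x \<in> set B"
  shows "card (set B - {x}) = length B - 1"
  using assms by (simp add: distinct_card)

lemma main_step:
  fixes \<beta> :: real and n :: nat
  assumes finX: "finite X"
    and Lf: "\<forall>x\<in>X. finite (Lf x) \<and> card (Lf x) = n"
    and Qok: "\<forall>(A,B)\<in>Q. A \<noteq> [] \<and> length A = length B \<and> distinct A \<and> distinct B \<and> set A \<inter> set B = {}"
    and bpos: "\<beta> > 0"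
    and cnt: "\<forall>x\<in>X. finite (Qx Q X x) \<and> (\<Sum>q\<in>Qx Q X x. (1/\<beta>) ^ (length (fst q) - 1)) \<le> real n - \<beta>"
    and HX: "H \<subseteq> X" and xH: "x \<in> H"
    and IH: "\<And>H' y. H' \<subseteq> H - {x} \<Longrightarrow> y \<in> H' \<Longrightarrow> \<beta> * card (Col Q Lf (H' - {y})) \<le> card (Col Q Lf H')"
  shows "\<beta> * card (Col Q Lf (H - {x})) \<le> card (Col Q Lf H)"
proof -
  define c where "c = card (Col Q Lf (H - {x}))"
  define C0 where "C0 = Col Q Lf (H - {x})"
  have finH: "finite H" using finX HX finite_subset by blast
  have finL: "\<forall>y\<in>H. finite (Lf y)" using Lf HX by auto
  have finC: "finite (Col Q Lf H')" if "H' \<subseteq> H" for H'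
    using finite_Col[of H' Lf Q] finH finL that finite_subset by blast
  define ext where "ext = (\<lambda>(a,f). f(x:=a)) ` (Lf x \<times> C0)"
  have inj: "inj_on (\<lambda>(a,f). f(x:=a)) (Lf x \<times> C0)"
  proof (rule inj_onI)
    fix p p' assume m0: "p \<in> Lf x \<times> C0" "p' \<in> Lf x \<times> C0" and e0: "(\<lambda>(a,f). f(x:=a)) p = (\<lambda>(a,f). f(x:=a)) p'"
    obtain a f where p: "p = (a,f)" by fastforce
    obtain a' f' where p': "p' = (a',f')" by fastforce
    have m: "(a, f) \<in> Lf x \<times> C0" "(a', f') \<in> Lf x \<times> C0" using m0 p p' by auto
    have e: "f(x := a) = f'(x := a')" using e0 p p' by simp
    have "a = a'" using fun_cong[OF e, of x] by simp
    moreover have "f = f'"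
    proof
      fix y show "f y = f' y"
      proof (cases "y = x")
        case True
        then have "f y = undefined" "f' y = undefined" using m unfolding C0_def Col_def by (auto simp: PiE_def extensional_def)
        then show ?thesis by simp
      next
        case False then show ?thesis using fun_cong[OF e, of y] by simp
      qed
    qed
    ultimately show "p = p'" using p p' by simp
  qed
  have finC0: "finite C0" unfolding C0_def using finC by auto
  have cardext: "card ext = n * c"
    unfolding ext_def c_def C0_def[symmetric] using card_image[OF inj] Lf HX xH by (auto simp: card_cartesian_product)
  have finext: "finite ext" unfolding ext_def using finC0 Lf HX xH by auto
  define Qh where "Qh = {q \<in> Qx Q X x. set (fst q) \<subseteq> H \<and> set (snd q) \<subseteq> H}"
  define D where "D q = (if x \<in> set (snd q) then set (snd q) else set (fst q))" for q
  define Bq where "Bq q = {g \<in> PiE H Lf. map g (fst q) = map g (snd q) \<and> restrict g (H - D q) \<in> Col Q Lf (H - D q)}" for q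
  have finQx: "finite (Qx Q X x)" using cnt HX xH by auto
  have finQh: "finite Qh" unfolding Qh_def using finQx by auto
  have bad: "ext - Col Q Lf H \<subseteq> (\<Union>q\<in>Qh. Bq q)"
  proof
    fix g assume g: "g \<in> ext - Col Q Lf H"
    then obtain a f where af: "a \<in> Lf x" "f \<in> C0" "g = f(x:=a)" unfolding ext_def by auto
    have gP: "g \<in> PiE H Lf" using af xH unfolding C0_def Col_def
      by (auto simp: PiE_def extensional_def Pi_def)
    then have "\<not> goodc Q H g" using g unfolding Col_def by auto
    then obtain A B where AB: "(A,B) \<in> Q" "set A \<subseteq> H" "set B \<subseteq> H" "map g A = map g B"
      unfolding goodc_def by auto
    have fgood: "goodc Q (H - {x}) f" using af unfolding C0_def Col_def by auto
    have xin: "x \<in> set A \<union> set B"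
    proof (rule ccontr)
      assume "x \<notin> set A \<union> set B"
      then have "set A \<subseteq> H - {x}" "set B \<subseteq> H - {x}" using AB by auto
      moreover have "map f A = map g A" "map f B = map g B" using \<open>x \<notin> set A \<union> set B\<close> af(3) by auto
      ultimately show False using fgood AB unfolding goodc_def by auto
    qed
    have qQh: "(A,B) \<in> Qh" unfolding Qh_def Qx_def using AB HX xin by auto
    have xD: "x \<in> D (A,B)" unfolding D_def using xin by auto
    have DH: "D (A,B) \<subseteq> H" unfolding D_def using AB by auto
    have "restrict g (H - D (A,B)) \<in> PiE (H - D (A,B)) Lf" using gP by (auto simp: PiE_def Pi_def)
    moreover have "goodc Q (H - D (A,B)) (restrict g (H - D (A,B)))"
      by (rule good_mono[OF fgood]) (use xD af(3) in auto)
    ultimately have "restrict g (H - D (A,B)) \<in> Col Q Lf (H - D (A,B))" unfolding Col_def by auto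
    then have "g \<in> Bq (A,B)" unfolding Bq_def using gP AB by auto
    then show "g \<in> (\<Union>q\<in>Qh. Bq q)" using qQh by blast
  qed
  have bqbound: "real (card (Bq q)) \<le> (1/\<beta>) ^ (length (fst q) - 1) * c" if q: "q \<in> Qh" for q
  proof -
    obtain A B where qAB: "q = (A,B)" by fastforce
    have AB: "(A,B) \<in> Q" "set A \<subseteq> H" "set B \<subseteq> H" "x \<in> set A \<union> set B"
      using q unfolding qAB Qh_def Qx_def by auto
    have ok: "A \<noteq> [] \<and> length A = length B \<and> distinct A \<and> distinct B \<and> set A \<inter> set B = {}"
      using Qok AB(1) by auto
    have injr: "inj_on (\<lambda>g. restrict g (H - D q)) (Bq q)"
    proof (rule inj_onI)
      fix g g' assume gg: "g \<in> Bq q" "g' \<in> Bq q" "restrict g (H - D q) = restrict g' (H - D q)"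
      have g1: "g \<in> PiE H Lf" "map g A = map g B" "g' \<in> PiE H Lf" "map g' A = map g' B"
        using gg unfolding Bq_def qAB by auto
      show "g = g'"
      proof (cases "x \<in> set B")
        case True
        then have "D q = set B" unfolding D_def qAB by simp
        then show ?thesis using determ[of g H Lf g' A B] gg(3) g1 ok AB by auto
      next
        case False
        then have "D q = set A" unfolding D_def qAB by simp
        moreover have "set B \<inter> set A = {}" using ok by auto
        ultimately show ?thesis using determ[of g H Lf g' B A] gg(3) g1 ok AB by simp
      qed
    qed
    have "card (Bq q) \<le> card (Col Q Lf (H - D q))"
      using card_inj_on_le[OF injr] finC[of "H - D q"] unfolding Bq_def by auto
    moreover have cD: "card (D q - {x}) = length (fst q) - 1" and xD: "x \<in> D q" and DH: "D q \<subseteq> H"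
      using ok AB unfolding D_def qAB by (auto simp: distinct_card)
    have "\<beta> ^ card (D q - {x}) * card (Col Q Lf ((H - {x}) - (D q - {x}))) \<le> card (Col Q Lf (H - {x}))"
      by (rule chain) (use IH DH finH finite_subset bpos in auto)
    moreover have "(H - {x}) - (D q - {x}) = H - D q" using xD by auto
    ultimately have "\<beta> ^ (length (fst q) - 1) * card (Bq q) \<le> c"
      unfolding c_def cD by (smt (verit) bpos mult_left_mono of_nat_le_iff zero_le_power)
    then show ?thesis using bpos by (simp add: field_simps power_divide)
  qed
  have finBq: "finite (Bq q)" for q
    by (rule finite_subset[of _ "PiE H Lf"]) (use finite_PiE[of H Lf] finH finL in \<open>auto simp: Bq_def\<close>)
  have "card (ext - Col Q Lf H) \<le> card (\<Union>q\<in>Qh. Bq q)"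
    using bad finQh finBq by (intro card_mono) auto
  also have "\<dots> \<le> (\<Sum>q\<in>Qh. card (Bq q))" by (rule card_UN_le[OF finQh])
  finally have "real (card (ext - Col Q Lf H)) \<le> (\<Sum>q\<in>Qh. real (card (Bq q)))" by (metis of_nat_le_iff of_nat_sum)
  also have "\<dots> \<le> (\<Sum>q\<in>Qh. (1/\<beta>) ^ (length (fst q) - 1) * c)" by (rule sum_mono) (use bqbound in auto)
  also have "\<dots> \<le> (\<Sum>q\<in>Qx Q X x. (1/\<beta>) ^ (length (fst q) - 1) * c)"
    by (rule sum_mono2[OF finQx]) (use bpos in \<open>auto simp: Qh_def\<close>)
  also have "\<dots> = (\<Sum>q\<in>Qx Q X x. (1/\<beta>) ^ (length (fst q) - 1)) * c" by (simp add: sum_distrib_right)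
  also have "\<dots> \<le> (real n - \<beta>) * c" using cnt HX xH by (intro mult_right_mono) auto
  finally have b1: "real (card (ext - Col Q Lf H)) \<le> (real n - \<beta>) * c" .
  have "ext \<subseteq> Col Q Lf H \<union> (ext - Col Q Lf H)" by auto
  then have "card ext \<le> card (Col Q Lf H \<union> (ext - Col Q Lf H))"
    using finC[of H] finext by (intro card_mono) auto
  also have "\<dots> \<le> card (Col Q Lf H) + card (ext - Col Q Lf H)" by (rule card_Un_le)
  finally have "real (card ext) \<le> real (card (Col Q Lf H)) + real (card (ext - Col Q Lf H))"
    by linarith
  moreover have "real (card ext) = real n * c" using cardext by simp
  ultimately have "real n * c \<le> card (Col Q Lf H) + (real n - \<beta>) * c" using b1 by linarith
  then show ?thesis unfolding c_def by (simp add: algebra_simps)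
qed

theorem rosenfeld:
  fixes \<beta> :: real and n :: nat
  assumes finX: "finite X"
    and Lf: "\<forall>x\<in>X. finite (Lf x) \<and> card (Lf x) = n"
    and Qok: "\<forall>(A,B)\<in>Q. A \<noteq> [] \<and> length A = length B \<and> distinct A \<and> distinct B \<and> set A \<inter> set B = {}"
    and bpos: "\<beta> > 0"
    and cnt: "\<forall>x\<in>X. finite (Qx Q X x) \<and> (\<Sum>q\<in>Qx Q X x. (1/\<beta>) ^ (length (fst q) - 1)) \<le> real n - \<beta>"
  shows "\<exists>f \<in> PiE X Lf. goodc Q X f"
proof -
  have step: "\<forall>H. card H = m \<longrightarrow> H \<subseteq> X \<longrightarrow> (\<forall>x\<in>H. \<beta> * card (Col Q Lf (H - {x})) \<le> card (Col Q Lf H))" for m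
  proof (induction m rule: less_induct)
    case (less m)
    show ?case
    proof (intro allI impI ballI)
      fix H x assume H: "card H = m" "H \<subseteq> X" and x: "x \<in> H"
      have finH: "finite H" using finX H finite_subset by blast
      show "\<beta> * card (Col Q Lf (H - {x})) \<le> card (Col Q Lf H)"
      proof (rule main_step[OF finX Lf Qok bpos cnt H(2) x])
        fix H' y assume "H' \<subseteq> H - {x}" "y \<in> H'"
        moreover have "card H' < m"
          using \<open>H' \<subseteq> H - {x}\<close> x finH H(1)
          by (metis card_Diff1_less card_mono finite_Diff le_less_trans)
        ultimately show "\<beta> * card (Col Q Lf (H' - {y})) \<le> card (Col Q Lf H')"
          using less H(2) by blast
      qed
    qed
  qed
  have "\<beta> ^ card X * card (Col Q Lf (X - X)) \<le> card (Col Q Lf X)"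
    by (rule chain) (use step finX bpos in auto)
  moreover have "Col Q Lf (X - X) = {\<lambda>_. undefined}" using Col_empty[of Q Lf] Qok by auto
  ultimately have "\<beta> ^ card X \<le> card (Col Q Lf X)" by simp
  moreover have "\<beta> ^ card X > 0" using bpos by simp
  ultimately have "card (Col Q Lf X) > 0" by linarith
  then obtain f where "f \<in> Col Q Lf X" by fastforce
  then show ?thesis unfolding Col_def by auto
qed


fun te :: "'a list \<Rightarrow> ('a + 'a set) list" where
  "te (v # w # rest) = Inl v # Inr {v, w} # te (w # rest)"
| "te [v] = [Inl v]"
| "te [] = []"

lemma total_seq_te: "total_seq c ps = map c (te ps)"
  by (induction ps rule: te.induct) auto

lemma set_te: "set (te ps) = Inl ` set ps \<union> Inr ` set (path_edges ps)"
  by (induction ps rule: te.induct) auto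

lemma pe_subset: "e \<in> set (path_edges ps) \<Longrightarrow> e \<subseteq> set ps \<and> e \<noteq> {}"
  by (induction ps rule: path_edges.induct) auto

lemma distinct_pe: "distinct ps \<Longrightarrow> distinct (path_edges ps)"
proof (induction ps rule: path_edges.induct)
  case (1 v w rest)
  have "{v, w} \<notin> set (path_edges (w # rest))"
    using pe_subset[of "{v,w}" "w # rest"] 1(2) by auto
  then show ?case using 1 by auto
qed auto

lemma distinct_te: "distinct ps \<Longrightarrow> distinct (te ps)"
proof (induction ps rule: te.induct)
  case (1 v w rest)
  have "{v, w} \<notin> set (path_edges (w # rest))"
    using pe_subset[of "{v,w}" "w # rest"] 1(2) by auto
  then show ?case using 1 by (auto simp: set_te)
qed auto

lemma length_te: "length (te ps) = 2 * length ps - 1"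
  by (induction ps rule: te.induct) auto

lemma length_pe: "length (path_edges ps) = length ps - 1"
  by (induction ps rule: path_edges.induct) auto

lemma te_drop: "i < length ps \<Longrightarrow> te (drop i ps) = drop (2 * i) (te ps)"
proof (induction i arbitrary: ps)
  case 0 then show ?case by simp
next
  case (Suc i)
  then obtain v w rest where ps: "ps = v # w # rest"
    by (metis Suc_less_eq length_Cons less_nat_zero_code list.exhaust list.size(3))
  show ?case using Suc.IH[of "w # rest"] Suc.prems ps by simp
qed

lemma te_take: "te (take (Suc m) ps) = take (2 * m + 1) (te ps)"
proof (induction m arbitrary: ps)
  case 0
  then show ?case by (cases ps rule: te.cases) auto
next
  case (Suc m)
  show ?case
  proof (cases ps rule: te.cases)
    case (1 v w rest)
    have "te (take (Suc (Suc m)) ps) = Inl v # Inr {v,w} # te (take (Suc m) (w # rest))"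
      using 1 by (cases m) auto
    then show ?thesis using Suc.IH[of "w # rest"] 1 by simp
  qed auto
qed

lemma pe_drop: "path_edges (drop i ps) = drop i (path_edges ps)"
proof (induction i arbitrary: ps)
  case 0 then show ?case by simp
next
  case (Suc i)
  show ?case
  proof (cases ps rule: path_edges.cases)
    case (1 v w rest)
    then show ?thesis using Suc.IH[of "w # rest"] by simp
  next
    case ("2_1") then show ?thesis by simp
  next
    case ("2_2" v) then show ?thesis by simp
  qed
qed

lemma pe_take: "path_edges (take (Suc m) ps) = take m (path_edges ps)"
proof (induction m arbitrary: ps)
  case 0
  then show ?case by (cases ps rule: path_edges.cases) auto
next
  case (Suc m)
  show ?case
  proof (cases ps rule: path_edges.cases)
    case (1 v w rest)
    have "path_edges (take (Suc (Suc m)) ps) = {v,w} # path_edges (take (Suc m) (w # rest))"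
      using 1 by (cases m) auto
    then show ?thesis using Suc.IH[of "w # rest"] 1 by simp
  qed auto
qed

lemma is_path_sub:
  assumes "is_path V E (c @ qs @ d)" "qs \<noteq> []"
  shows "is_path V E qs"
  unfolding is_path_def
proof (intro conjI allI impI)
  show "qs \<noteq> []" by fact
  show "distinct qs" "set qs \<subseteq> V" using assms(1) unfolding is_path_def by auto
  fix i assume i: "Suc i < length qs"
  have all: "\<forall>k. Suc k < length (c @ qs @ d) \<longrightarrow> {(c @ qs @ d) ! k, (c @ qs @ d) ! Suc k} \<in> E"
    using assms(1) unfolding is_path_def by blast
  have lt: "Suc (length c + i) < length (c @ qs @ d)" using i by simp
  have "{(c @ qs @ d) ! (length c + i), (c @ qs @ d) ! Suc (length c + i)} \<in> E"
    using all lt by blast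
  moreover have "(c @ qs @ d) ! (length c + i) = qs ! i" "(c @ qs @ d) ! Suc (length c + i) = qs ! Suc i"
    using i by (simp_all add: nth_append)
  ultimately show "{qs ! i, qs ! Suc i} \<in> E" by simp
qed

lemma is_path_slice:
  assumes "is_path V E ps" "i + m \<le> length ps" "m > 0"
  shows "is_path V E (take m (drop i ps))"
proof -
  have "ps = take i ps @ take m (drop i ps) @ drop m (drop i ps)" by (simp only: append_take_drop_id)
  moreover have "take m (drop i ps) \<noteq> []" using assms by simp
  ultimately show ?thesis using is_path_sub assms(1) by metis
qed

lemma nonrep_map:
  assumes "\<And>a A B b. xs = a @ A @ B @ b \<Longrightarrow> A \<noteq> [] \<Longrightarrow> length A = length B \<Longrightarrow> map f A \<noteq> map f B"
  shows "nonrep (map f xs)"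
  unfolding nonrep_def
proof
  assume "\<exists>a r b. r \<noteq> [] \<and> map f xs = a @ r @ r @ b"
  then obtain a r b where r: "r \<noteq> []" "map f xs = a @ r @ r @ b" by blast
  from r(2) obtain a' ys where 1: "xs = a' @ ys" "a = map f a'" "r @ r @ b = map f ys"
    unfolding map_eq_append_conv by blast
  from 1(3) obtain A zs where 2: "ys = A @ zs" "r = map f A" "r @ b = map f zs"
    by (metis map_eq_append_conv)
  from 2(3) obtain B b' where 3: "zs = B @ b'" "r = map f B" "b = map f b'"
    by (metis map_eq_append_conv)
  have "xs = a' @ A @ B @ b'" using 1 2 3 by simp
  moreover have "A \<noteq> []" "length A = length B" "map f A = map f B" using 2 3 r(1) by (auto dest: arg_cong[of _ _ length])
  ultimately show False using assms[of a' A B b'] by blast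
qed


lemma te_window:
  assumes p: "is_path V E ps" and w: "te ps = a @ w @ b" and lw: "length w = 2 * j" and j: "j \<ge> 1"
  shows "\<exists>s qs. s \<le> 1 \<and> is_path V E qs \<and> length qs = Suc j \<and> w = take (2 * j) (drop s (te qs))"
proof -
  define k where "k = length a"
  define i where "i = k div 2"
  define s where "s = k mod 2"
  define qs where "qs = take (Suc j) (drop i ps)"
  have ks: "k = 2 * i + s" unfolding i_def s_def by simp
  have s1: "s \<le> 1" unfolding s_def by simp
  have lt: "length (te ps) = 2 * length ps - 1" by (rule length_te)
  have "length (te ps) = k + 2 * j + length b" using w lw unfolding k_def by simp
  moreover have "ps \<noteq> []" using p unfolding is_path_def by simp
  ultimately have bound: "k + 2 * j + 1 \<le> 2 * length ps" using lt by (cases ps) auto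
  then have ij: "i + Suc j \<le> length ps" using ks by linarith
  have wd: "w = take (2 * j) (drop k (te ps))" using w lw unfolding k_def by simp
  have il: "i < length ps" using ij by simp
  have "drop k (te ps) = drop s (drop (2 * i) (te ps))" using ks by (simp add: add.commute)
  also have "\<dots> = drop s (te (drop i ps))" using te_drop[OF il] by simp
  finally have d1: "drop k (te ps) = drop s (te (drop i ps))" .
  have tq: "te qs = take (2 * j + 1) (te (drop i ps))" unfolding qs_def by (rule te_take)
  have "take (2 * j) (drop s (te qs)) = take (2 * j) (drop s (take (2 * j + 1) (te (drop i ps))))"
    using tq by simp
  also have "\<dots> = take (2 * j) (take (2 * j + 1 - s) (drop s (te (drop i ps))))"
    by (simp add: drop_take)
  also have "\<dots> = take (2 * j) (drop s (te (drop i ps)))" using s1 by (simp add: min_def)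
  finally have "w = take (2 * j) (drop s (te qs))" using wd d1 by simp
  moreover have "is_path V E qs" unfolding qs_def by (rule is_path_slice[OF p ij]) simp
  moreover have "length qs = Suc j" unfolding qs_def using ij by simp
  ultimately show ?thesis using s1 by blast
qed

lemma pe_window:
  assumes p: "is_path V E ps" and w: "path_edges ps = a @ w @ b"
  shows "\<exists>qs. is_path V E qs \<and> length qs = Suc (length w) \<and> path_edges qs = w"
proof -
  define qs where "qs = take (Suc (length w)) (drop (length a) ps)"
  have "length (path_edges ps) = length ps - 1" by (rule length_pe)
  moreover have "ps \<noteq> []" using p unfolding is_path_def by simp
  ultimately have ij: "length a + Suc (length w) \<le> length ps" using w by (cases ps) auto
  have "path_edges qs = take (length w) (path_edges (drop (length a) ps))"
    unfolding qs_def by (rule pe_take)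
  also have "\<dots> = w" using w by (simp add: pe_drop)
  finally have "path_edges qs = w" .
  moreover have "is_path V E qs" unfolding qs_def by (rule is_path_slice[OF p ij]) simp
  moreover have "length qs = Suc (length w)" unfolding qs_def using ij by simp
  ultimately show ?thesis by blast
qed

lemma map_window:
  assumes p: "is_path V E ps" and w: "map Inl ps = a @ w @ b" and "w \<noteq> []"
  shows "\<exists>qs. is_path V E qs \<and> length qs = length w \<and> w = map Inl qs"
proof -
  obtain a' ys where 1: "ps = a' @ ys" "a = map Inl a'" "w @ b = map Inl ys"
    using w by (metis map_eq_append_conv)
  obtain qs d where 2: "ys = qs @ d" "w = map Inl qs" "b = map Inl d"
    using 1(3) by (metis map_eq_append_conv)
  have "is_path V E qs" using is_path_sub[of V E a' qs d] p 1 2 assms(3) by auto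
  then show ?thesis using 2 by auto
qed

definition Qg :: "'a set \<Rightarrow> 'a set set \<Rightarrow> (('a + 'a set) list \<times> ('a + 'a set) list) set" where
  "Qg V E = {(A,B). A \<noteq> [] \<and> length A = length B \<and> (\<exists>ps a b. is_path V E ps \<and>
      (te ps = a @ A @ B @ b \<or> map Inl ps = a @ A @ B @ b \<or> map Inr (path_edges ps) = a @ A @ B @ b))}"

lemma pe_nth: "i < length ps - 1 \<Longrightarrow> path_edges ps ! i = {ps ! i, ps ! Suc i}"
proof (induction ps arbitrary: i rule: path_edges.induct)
  case (1 v w rest)
  then show ?case by (cases i) auto
qed auto

lemma path_elems:
  assumes "is_path V E ps"
  shows "set (te ps) \<subseteq> elems V E"
proof -
  have "set (path_edges ps) \<subseteq> E"
  proof
    fix e assume "e \<in> set (path_edges ps)"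
    then obtain i where i: "i < length (path_edges ps)" "path_edges ps ! i = e" by (metis in_set_conv_nth)
    then have "e = {ps ! i, ps ! Suc i}" "Suc i < length ps" using pe_nth[of i ps] length_pe[of ps] by auto
    then show "e \<in> E" using assms unfolding is_path_def by auto
  qed
  then show ?thesis using assms unfolding set_te elems_def is_path_def by auto
qed

lemma Qg_ok: "\<forall>(A,B)\<in>Qg V E. A \<noteq> [] \<and> length A = length B \<and> distinct A \<and> distinct B \<and> set A \<inter> set B = {}"
proof (clarify)
  fix A B assume "(A,B) \<in> Qg V E"
  then obtain ps a b where q: "A \<noteq> []" "length A = length B" "is_path V E ps"
    "te ps = a @ A @ B @ b \<or> map Inl ps = a @ A @ B @ b \<or> map Inr (path_edges ps) = a @ A @ B @ b"
    unfolding Qg_def by blast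
  have dp: "distinct ps" using q(3) unfolding is_path_def by simp
  have "distinct (te ps)" "distinct (map Inl ps)" "distinct (map Inr (path_edges ps))"
    using distinct_te[OF dp] distinct_pe[OF dp] dp by (auto simp: distinct_map inj_on_def)
  then have "distinct (a @ A @ B @ b)" using q(4) by metis
  then show "A \<noteq> [] \<and> length A = length B \<and> distinct A \<and> distinct B \<and> set A \<inter> set B = {}"
    using q by auto
qed

lemma good_thue:
  fixes V :: "'a set"
  assumes "goodc (Qg V E) (elems V E) f"
  shows "total_thue V E f"
  unfolding total_thue_def
proof (intro allI impI conjI)
  fix ps assume p: "is_path V E ps"
  have sub: "set (te ps) \<subseteq> elems V E" by (rule path_elems[OF p])
  have key: "map f A \<noteq> map f B" if "(A,B) \<in> Qg V E" "set A \<subseteq> elems V E" "set B \<subseteq> elems V E" for A B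
    using assms that unfolding goodc_def by blast
  show "nonrep (total_seq f ps)" unfolding total_seq_te
  proof (rule nonrep_map)
    fix a A B b assume h: "te ps = a @ A @ B @ b" "A \<noteq> []" "length A = length B"
    then have "(A,B) \<in> Qg V E" using p unfolding Qg_def by blast
    moreover have "set A \<subseteq> elems V E" "set B \<subseteq> elems V E" using sub h(1) by auto
    ultimately show "map f A \<noteq> map f B" using key by blast
  qed
  have m1: "map (\<lambda>v. f (Inl v)) ps = map f (map Inl ps)" by simp
  show "nonrep (map (\<lambda>v. f (Inl v)) ps)" unfolding m1
  proof (rule nonrep_map)
    fix a A B b assume h: "map (Inl :: 'a \<Rightarrow> 'a + 'a set) ps = a @ A @ B @ b" "A \<noteq> []" "length A = length B"
    then have "(A,B) \<in> Qg V E" using p unfolding Qg_def by blast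
    moreover have "set (map (Inl :: 'a \<Rightarrow> 'a + 'a set) ps) \<subseteq> elems V E" using sub by (auto simp: set_te)
    then have "set A \<subseteq> elems V E" "set B \<subseteq> elems V E" using h(1) by auto
    ultimately show "map f A \<noteq> map f B" using key by blast
  qed
  have m2: "map (\<lambda>e. f (Inr e)) (path_edges ps) = map f (map Inr (path_edges ps))" by simp
  show "nonrep (map (\<lambda>e. f (Inr e)) (path_edges ps))" unfolding m2
  proof (rule nonrep_map)
    fix a A B b assume h: "map (Inr :: 'a set \<Rightarrow> 'a + 'a set) (path_edges ps) = a @ A @ B @ b" "A \<noteq> []" "length A = length B"
    then have "(A,B) \<in> Qg V E" using p unfolding Qg_def by blast
    moreover have "set (map (Inr :: 'a set \<Rightarrow> 'a + 'a set) (path_edges ps)) \<subseteq> elems V E" using sub by (auto simp: set_te)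
    then have "set A \<subseteq> elems V E" "set B \<subseteq> elems V E" using h(1) by auto
    ultimately show "map f A \<noteq> map f B" using key by blast
  qed
qed


definition adjw :: "'a set set \<Rightarrow> 'a list \<Rightarrow> bool" where
  "adjw E ws \<longleftrightarrow> (\<forall>i. Suc i < length ws \<longrightarrow> {ws ! i, ws ! Suc i} \<in> E)"

definition Wk :: "'a set \<Rightarrow> 'a set set \<Rightarrow> 'a \<Rightarrow> nat \<Rightarrow> 'a list set" where
  "Wk V E v m = {ws. length ws = Suc m \<and> hd ws = v \<and> adjw E ws \<and> set ws \<subseteq> V}"

definition Nb :: "'a set \<Rightarrow> 'a set set \<Rightarrow> 'a \<Rightarrow> 'a set" where
  "Nb V E v = {w \<in> V. {v, w} \<in> E}"

definition Pu :: "'a set \<Rightarrow> 'a set set \<Rightarrow> 'a \<Rightarrow> nat \<Rightarrow> 'a list set" where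
  "Pu V E u m = {qs. is_path V E qs \<and> length qs = m \<and> u \<in> set qs}"

lemma adjw_take: "adjw E ws \<Longrightarrow> adjw E (take n ws)"
  unfolding adjw_def by auto

lemma adjw_drop: "adjw E ws \<Longrightarrow> adjw E (drop n ws)"
  unfolding adjw_def by (auto simp: add.commute)

lemma adjw_rev: "adjw E ws \<Longrightarrow> adjw E (rev ws)"
  unfolding adjw_def
proof (intro allI impI)
  fix i assume a: "\<forall>i. Suc i < length ws \<longrightarrow> {ws ! i, ws ! Suc i} \<in> E" and i: "Suc i < length (rev ws)"
  define k where "k = length ws - Suc (Suc i)"
  have k1: "Suc k < length ws" "length ws - Suc i = Suc k" using i unfolding k_def by auto
  have "rev ws ! i = ws ! Suc k" "rev ws ! Suc i = ws ! k"
    using i k1 by (auto simp: rev_nth k_def)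
  then show "{rev ws ! i, rev ws ! Suc i} \<in> E" using a k1 by (auto simp: insert_commute)
qed

lemma finE: "simple_graph V E \<Longrightarrow> finite E"
proof -
  assume g: "simple_graph V E"
  then have "E \<subseteq> Pow V" unfolding simple_graph_def by auto
  then show "finite E" using g unfolding simple_graph_def by (meson finite_Pow_iff finite_subset)
qed

lemma card_Nb:
  assumes g: "simple_graph V E" and d: "max_degree_le V E D" and v: "v \<in> V"
  shows "finite (Nb V E v) \<and> card (Nb V E v) \<le> D"
proof -
  have fV: "finite V" using g unfolding simple_graph_def by simp
  have fin: "finite (Nb V E v)" unfolding Nb_def using fV by simp
  have inj: "inj_on (\<lambda>w. {v, w}) (Nb V E v)" by (rule inj_onI) (auto simp: doubleton_eq_iff)
  have "(\<lambda>w. {v, w}) ` Nb V E v \<subseteq> {e \<in> E. v \<in> e}" unfolding Nb_def by auto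
  then have "card (Nb V E v) \<le> card {e \<in> E. v \<in> e}"
    using card_inj_on_le[OF inj] finE[OF g] by auto
  also have "\<dots> \<le> D" using d v unfolding max_degree_le_def by auto
  finally show ?thesis using fin by simp
qed

lemma Wk_bound:
  assumes g: "simple_graph V E" and d: "max_degree_le V E D"
  shows "v \<in> V \<Longrightarrow> finite (Wk V E v m) \<and> card (Wk V E v m) \<le> D ^ m"
proof (induction m arbitrary: v)
  case 0
  have "Wk V E v 0 = {[v]}" using 0 unfolding Wk_def adjw_def
    by (auto simp: length_Suc_conv)
  then show ?case by simp
next
  case (Suc m)
  have sub: "Wk V E v (Suc m) \<subseteq> (\<lambda>ws. v # ws) ` (\<Union>w\<in>Nb V E v. Wk V E w m)"
  proof
    fix ws assume ws: "ws \<in> Wk V E v (Suc m)"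
    then obtain x ws' where ws1: "ws = x # ws'" "length ws' = Suc m"
      unfolding Wk_def by (auto simp: length_Suc_conv)
    have xv: "x = v" using ws ws1 unfolding Wk_def by auto
    have adj: "adjw E ws" "set ws \<subseteq> V" using ws unfolding Wk_def by auto
    obtain y ws'' where ws2: "ws' = y # ws''" using ws1(2) by (cases ws') auto
    have "{ws ! 0, ws ! Suc 0} \<in> E" using adj ws1 unfolding adjw_def by auto
    then have "{v, y} \<in> E" using ws1 ws2 xv by simp
    moreover have "y \<in> V" using adj ws1 ws2 by auto
    ultimately have yN: "y \<in> Nb V E v" unfolding Nb_def by auto
    have "adjw E ws'" using adjw_drop[OF adj(1), of 1] ws1 by simp
    then have "ws' \<in> Wk V E y m" using ws1 ws2 adj unfolding Wk_def by auto
    then show "ws \<in> (\<lambda>ws. v # ws) ` (\<Union>w\<in>Nb V E v. Wk V E w m)" using yN ws1 xv by blast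
  qed
  have nb: "finite (Nb V E v) \<and> card (Nb V E v) \<le> D" by (rule card_Nb[OF g d Suc.prems])
  have nbV: "Nb V E v \<subseteq> V" unfolding Nb_def by auto
  have finU: "finite (\<Union>w\<in>Nb V E v. Wk V E w m)" using nb nbV Suc.IH by auto
  have "card (Wk V E v (Suc m)) \<le> card ((\<lambda>ws. v # ws) ` (\<Union>w\<in>Nb V E v. Wk V E w m))"
    using sub finU by (intro card_mono) auto
  also have "\<dots> \<le> card (\<Union>w\<in>Nb V E v. Wk V E w m)" by (rule card_image_le[OF finU])
  also have "\<dots> \<le> (\<Sum>w\<in>Nb V E v. card (Wk V E w m))" by (rule card_UN_le[OF conjunct1[OF nb]])
  also have "\<dots> \<le> (\<Sum>w\<in>Nb V E v. D ^ m)" by (rule sum_mono) (use Suc.IH nbV in auto)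
  also have "\<dots> = card (Nb V E v) * D ^ m" by simp
  also have "\<dots> \<le> D * D ^ m" using nb by simp
  finally show ?case using sub finU finite_subset by auto
qed

lemma Pu_bound:
  assumes g: "simple_graph V E" and d: "max_degree_le V E D" and u: "u \<in> V"
  shows "finite (Pu V E u (Suc k)) \<and> card (Pu V E u (Suc k)) \<le> Suc k * D ^ k"
proof -
  define F where "F = (\<lambda>(r, s). rev r @ tl s :: 'a list)"
  have sub: "Pu V E u (Suc k) \<subseteq> (\<Union>i\<in>{..k}. F ` (Wk V E u i \<times> Wk V E u (k - i)))"
  proof
    fix qs assume qs: "qs \<in> Pu V E u (Suc k)"
    then have p: "is_path V E qs" "length qs = Suc k" "u \<in> set qs" unfolding Pu_def by auto
    obtain i where i: "i < length qs" "qs ! i = u" using p(3) by (metis in_set_conv_nth)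
    have adj: "adjw E qs" using p(1) unfolding is_path_def adjw_def by auto
    have sV: "set qs \<subseteq> V" using p(1) unfolding is_path_def by auto
    define r where "r = rev (take (Suc i) qs)"
    define s where "s = drop i qs"
    have "r \<in> Wk V E u i"
    proof -
      have "length r = Suc i" unfolding r_def using i by simp
      moreover have "hd r = u" unfolding r_def using i
        by (simp add: hd_rev take_Suc_conv_app_nth)
      moreover have "adjw E r" unfolding r_def by (intro adjw_rev adjw_take adj)
      moreover have "set r \<subseteq> V" unfolding r_def using sV set_take_subset by fastforce
      ultimately show ?thesis unfolding Wk_def by auto
    qed
    moreover have "s \<in> Wk V E u (k - i)"
    proof -
      have "length s = Suc (k - i)" unfolding s_def using i p(2) by simp
      moreover have "hd s = u" unfolding s_def using i by (simp add: hd_drop_conv_nth)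
      moreover have "adjw E s" unfolding s_def by (intro adjw_drop adj)
      moreover have "set s \<subseteq> V" unfolding s_def using sV set_drop_subset by fastforce
      ultimately show ?thesis unfolding Wk_def by auto
    qed
    moreover have "F (r, s) = qs" unfolding F_def r_def s_def
      by (simp add: tl_drop drop_Suc[symmetric])
    moreover have "i \<in> {..k}" using i p(2) by simp
    ultimately show "qs \<in> (\<Union>i\<in>{..k}. F ` (Wk V E u i \<times> Wk V E u (k - i)))" by force
  qed
  have wb: "\<And>m. finite (Wk V E u m) \<and> card (Wk V E u m) \<le> D ^ m" using Wk_bound[OF g d u] by blast
  have finU: "finite (\<Union>i\<in>{..k}. F ` (Wk V E u i \<times> Wk V E u (k - i)))" using wb by auto
  have "card (Pu V E u (Suc k)) \<le> card (\<Union>i\<in>{..k}. F ` (Wk V E u i \<times> Wk V E u (k - i)))"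
    using sub finU by (intro card_mono) auto
  also have "\<dots> \<le> (\<Sum>i\<in>{..k}. card (F ` (Wk V E u i \<times> Wk V E u (k - i))))" by (rule card_UN_le) simp
  also have "\<dots> \<le> (\<Sum>i\<in>{..k}. D ^ i * D ^ (k - i))"
  proof (rule sum_mono)
    fix i assume "i \<in> {..k}"
    have "card (F ` (Wk V E u i \<times> Wk V E u (k - i))) \<le> card (Wk V E u i \<times> Wk V E u (k - i))"
      by (rule card_image_le) (use wb in auto)
    also have "\<dots> = card (Wk V E u i) * card (Wk V E u (k - i))" by (simp add: card_cartesian_product)
    also have "\<dots> \<le> D ^ i * D ^ (k - i)" using wb by (intro mult_mono) auto
    finally show "card (F ` (Wk V E u i \<times> Wk V E u (k - i))) \<le> D ^ i * D ^ (k - i)" .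
  qed
  also have "\<dots> = (\<Sum>i\<in>{..k}. D ^ k)" by (rule sum.cong) (auto simp: power_add[symmetric])
  also have "\<dots> = Suc k * D ^ k" by simp
  finally show ?thesis using finite_subset[OF sub finU] by auto
qed


lemma choose_u:
  assumes g: "simple_graph V E" and x: "x \<in> elems V E"
  shows "\<exists>u\<in>V. \<forall>qs. x \<in> set (te qs) \<longrightarrow> u \<in> set qs"
proof (cases x)
  case (Inl v)
  then have "v \<in> V" using x unfolding elems_def by auto
  then show ?thesis using Inl by (auto simp: set_te)
next
  case (Inr e)
  then have "e \<in> E" using x unfolding elems_def by auto
  then obtain a b where ab: "a \<in> V" "e = {a, b}" using g unfolding simple_graph_def by blast
  have "a \<in> set qs" if "x \<in> set (te qs)" for qs
  proof -
    have "e \<in> set (path_edges qs)" using that Inr by (auto simp: set_te)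
    then show ?thesis using pe_subset ab by blast
  qed
  then show ?thesis using ab by blast
qed

definition sp :: "nat \<Rightarrow> 'b list \<Rightarrow> 'b list \<times> 'b list" where
  "sp j w = (take j w, drop j w)"

definition Wall :: "'a set \<Rightarrow> 'a set set \<Rightarrow> 'a \<Rightarrow> nat \<Rightarrow> ('a + 'a set) list set" where
  "Wall V E u j = (\<lambda>(s, qs). take (2 * j) (drop s (te qs))) ` ({..1::nat} \<times> Pu V E u (Suc j))
     \<union> map Inl ` Pu V E u (2 * j) \<union> (\<lambda>qs. map Inr (path_edges qs)) ` Pu V E u (Suc (2 * j))"

lemma Qj_sub:
  assumes u: "\<forall>qs. x \<in> set (te qs) \<longrightarrow> u \<in> set qs" and j: "j \<ge> 1"
  shows "{q \<in> Qx (Qg V E) X x. length (fst q) = j} \<subseteq> sp j ` Wall V E u j"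
proof
  fix q assume q: "q \<in> {q \<in> Qx (Qg V E) X x. length (fst q) = j}"
  obtain A B where qAB: "q = (A, B)" by fastforce
  have h: "(A, B) \<in> Qg V E" "x \<in> set A \<union> set B" "length A = j"
    using q unfolding qAB Qx_def by auto
  obtain ps a b where hp: "A \<noteq> []" "length A = length B" "is_path V E ps"
    "te ps = a @ A @ B @ b \<or> map Inl ps = a @ A @ B @ b \<or> map Inr (path_edges ps) = a @ A @ B @ b"
    using h(1) unfolding Qg_def by blast
  define w where "w = A @ B"
  have lw: "length w = 2 * j" unfolding w_def using hp h by simp
  have spw: "sp j w = q" unfolding sp_def w_def qAB using h(3) by simp
  have xw: "x \<in> set w" unfolding w_def using h(2) by simp
  have "w \<in> Wall V E u j"
  proof -
    consider (t) "te ps = a @ w @ b" | (v) "map Inl ps = a @ w @ b" | (e) "map Inr (path_edges ps) = a @ w @ b"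
      using hp(4) unfolding w_def by auto
    then show ?thesis
    proof cases
      case t
      then obtain s qs where sq: "s \<le> 1" "is_path V E qs" "length qs = Suc j" "w = take (2 * j) (drop s (te qs))"
        using te_window[OF hp(3) t lw j] by blast
      have "x \<in> set (te qs)" using xw sq(4) by (meson in_set_dropD in_set_takeD)
      then have "qs \<in> Pu V E u (Suc j)" using u sq unfolding Pu_def by auto
      then show ?thesis unfolding Wall_def using sq by force
    next
      case v
      have "w \<noteq> []" using lw j by auto
      then obtain qs where sq: "is_path V E qs" "length qs = length w" "w = map Inl qs"
        using map_window[OF hp(3) v] by blast
      have "x \<in> set (te qs)" using xw sq(3) by (auto simp: set_te)
      then have "qs \<in> Pu V E u (2 * j)" using u sq lw unfolding Pu_def by auto
      then show ?thesis unfolding Wall_def using sq by force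
    next
      case e
      obtain a' ys where 1: "path_edges ps = a' @ ys" "a = map Inr a'" "w @ b = map Inr ys"
        using e by (metis map_eq_append_conv)
      obtain w' d where 2: "ys = w' @ d" "w = map Inr w'" "b = map Inr d"
        using 1(3) by (metis map_eq_append_conv)
      have "path_edges ps = a' @ w' @ d" using 1 2 by simp
      then obtain qs where sq: "is_path V E qs" "length qs = Suc (length w')" "path_edges qs = w'"
        using pe_window[OF hp(3)] by blast
      have "x \<in> set (te qs)" using xw sq(3) 2(2) by (auto simp: set_te)
      then have "qs \<in> Pu V E u (Suc (2 * j))" using u sq lw 2(2) unfolding Pu_def by auto
      then show ?thesis unfolding Wall_def using sq 2(2) by force
    qed
  qed
  then show "q \<in> sp j ` Wall V E u j" using spw by force
qed

lemma Wall_bound: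
  assumes g: "simple_graph V E" and d: "max_degree_le V E D" and u: "u \<in> V" and D3: "D \<ge> 3"
  shows "finite (Wall V E u (Suc i)) \<and> card (Wall V E u (Suc i)) \<le> 5 * 2 ^ i * D ^ (2 * i + 2)"
proof -
  have p1: "finite (Pu V E u (Suc (Suc i))) \<and> card (Pu V E u (Suc (Suc i))) \<le> Suc (Suc i) * D ^ Suc i"
    by (rule Pu_bound[OF g d u])
  have p2: "finite (Pu V E u (Suc (2 * i + 1))) \<and> card (Pu V E u (Suc (2 * i + 1))) \<le> Suc (2 * i + 1) * D ^ (2 * i + 1)"
    by (rule Pu_bound[OF g d u])
  have p3: "finite (Pu V E u (Suc (2 * i + 2))) \<and> card (Pu V E u (Suc (2 * i + 2))) \<le> Suc (2 * i + 2) * D ^ (2 * i + 2)"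
    by (rule Pu_bound[OF g d u])
  have e2: "2 * Suc i = Suc (2 * i + 1)" by simp
  have e3: "Suc (2 * Suc i) = Suc (2 * i + 2)" by simp
  define W1 where "W1 = (\<lambda>(s, qs). take (2 * Suc i) (drop s (te qs))) ` ({..1::nat} \<times> Pu V E u (Suc (Suc i)))"
  define W2 where "W2 = (map Inl ` Pu V E u (2 * Suc i) :: ('a + 'a set) list set)"
  define W3 where "W3 = ((\<lambda>qs. map Inr (path_edges qs)) ` Pu V E u (Suc (2 * Suc i)) :: ('a + 'a set) list set)"
  have W: "Wall V E u (Suc i) = W1 \<union> W2 \<union> W3" unfolding Wall_def W1_def W2_def W3_def by simp
  have f1: "finite W1" "card W1 \<le> 2 * (Suc (Suc i) * D ^ Suc i)"
  proof -
    have "finite ({..1::nat} \<times> Pu V E u (Suc (Suc i)))" using p1 by simp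
    then show "finite W1" unfolding W1_def by simp
    have "card W1 \<le> card ({..1::nat} \<times> Pu V E u (Suc (Suc i)))" unfolding W1_def
      by (rule card_image_le) (use p1 in simp)
    also have "\<dots> = 2 * card (Pu V E u (Suc (Suc i)))" by (simp add: card_cartesian_product)
    also have "\<dots> \<le> 2 * (Suc (Suc i) * D ^ Suc i)" using p1 by simp
    finally show "card W1 \<le> 2 * (Suc (Suc i) * D ^ Suc i)" .
  qed
  have f2: "finite W2" "card W2 \<le> Suc (2 * i + 1) * D ^ (2 * i + 1)"
    unfolding W2_def e2 using p2 le_trans[OF card_image_le] by auto
  have f3: "finite W3" "card W3 \<le> Suc (2 * i + 2) * D ^ (2 * i + 2)"
    unfolding W3_def e3 using p3 le_trans[OF card_image_le] by auto
  have "card (Wall V E u (Suc i)) \<le> card W1 + card W2 + card W3"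
    unfolding W using card_Un_le[of "W1 \<union> W2" W3] card_Un_le[of W1 W2] by linarith
  also have "\<dots> \<le> 2 * (Suc (Suc i) * D ^ Suc i) + Suc (2 * i + 1) * D ^ (2 * i + 1) + Suc (2 * i + 2) * D ^ (2 * i + 2)"
    using f1 f2 f3 by simp
  also have "\<dots> \<le> 5 * 2 ^ i * D ^ (2 * i + 2)"
  proof -
    have a1: "3 * D ^ Suc i \<le> D ^ (2 * i + 2)"
    proof -
      have "1 \<le> D ^ i" using D3 by simp
      then have "3 * 1 \<le> D * D ^ i" using D3 by (intro mult_le_mono)
      then have "3 \<le> D ^ Suc i" by simp
      then have "3 * D ^ Suc i \<le> D ^ Suc i * D ^ Suc i" by simp
      also have "\<dots> = D ^ (2 * i + 2)" by (simp add: power_add[symmetric] mult_2)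
      finally show ?thesis .
    qed
    have a2: "3 * D ^ (2 * i + 1) \<le> D ^ (2 * i + 2)" using D3 by simp
    have a3: "2 * i + 3 \<le> 3 * 2 ^ i"
    proof (induction i)
      case 0 then show ?case by simp
    next
      case (Suc i)
      have "1 \<le> (2::nat) ^ i" by simp
      then show ?case using Suc by simp
    qed
    have "3 * (2 * (Suc (Suc i) * D ^ Suc i) + Suc (2 * i + 1) * D ^ (2 * i + 1) + Suc (2 * i + 2) * D ^ (2 * i + 2))
       = 2 * Suc (Suc i) * (3 * D ^ Suc i) + Suc (2 * i + 1) * (3 * D ^ (2 * i + 1)) + 3 * Suc (2 * i + 2) * D ^ (2 * i + 2)"
      by (simp add: algebra_simps)
    also have "\<dots> \<le> 2 * Suc (Suc i) * D ^ (2 * i + 2) + Suc (2 * i + 1) * D ^ (2 * i + 2) + 3 * Suc (2 * i + 2) * D ^ (2 * i + 2)"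
      using a1 a2 by (intro add_mono mult_left_mono) auto
    also have "\<dots> = 5 * (2 * i + 3) * D ^ (2 * i + 2)" by (simp add: algebra_simps)
    also have "\<dots> \<le> 5 * (3 * 2 ^ i) * D ^ (2 * i + 2)" using a3 by (intro mult_right_mono) auto
    finally show ?thesis by simp
  qed
  finally show ?thesis using f1 f2 f3 W by auto
qed


lemma alg:
  fixes D :: real
  assumes "D > 0"
  shows "5 * 2 ^ i * D ^ (2 * i + 2) * (1 / (8 * D\<^sup>2)) ^ i = 5 * D\<^sup>2 * (1 / 4) ^ i"
proof -
  have e1: "(8::real) ^ i = 4 ^ i * 2 ^ i" by (simp add: power_mult_distrib[symmetric])
  have e2: "(D\<^sup>2) ^ i = D ^ (2 * i)" by (simp add: power_mult)
  have e3: "D ^ (2 * i + 2) = D ^ (2 * i) * D\<^sup>2" by (rule power_add)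
  have pos: "D ^ (2 * i) > 0" using assms by simp
  have f: "(1 / (8 * D\<^sup>2)) ^ i = 1 / (4 ^ i * 2 ^ i * D ^ (2 * i))"
    by (simp add: power_divide power_mult_distrib e1 e2)
  have g: "(1 / 4 :: real) ^ i = 1 / 4 ^ i" by (simp add: power_divide)
  have gen: "5 * t * (P * Q) * (1 / (ff * t * P)) = 5 * Q * (1 / ff)" if "P > 0" "t > 0" "ff > 0" for t P Q ff :: real
    using that by (simp add: field_simps)
  show ?thesis unfolding e3 f g by (rule gen) (use pos in auto)
qed

lemma Qx_count:
  fixes D :: nat
  assumes g: "simple_graph V E" and d: "max_degree_le V E D" and D3: "D \<ge> 3"
    and x: "x \<in> elems V E"
  shows "finite (Qx (Qg V E) (elems V E) x) \<and>
    (\<Sum>q\<in>Qx (Qg V E) (elems V E) x. (1 / (8 * (real D)\<^sup>2)) ^ (length (fst q) - 1)) \<le> 7 * (real D)\<^sup>2"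
proof -
  define X where "X = elems V E"
  define S where "S = Qx (Qg V E) X x"
  define K where "K = card X"
  define r where "r = 1 / (8 * (real D)\<^sup>2)"
  obtain u where u: "u \<in> V" "\<forall>qs. x \<in> set (te qs) \<longrightarrow> u \<in> set qs" using choose_u[OF g x] by blast
  have finX: "finite X" unfolding X_def elems_def using g finE[OF g] unfolding simple_graph_def by simp
  have lenb: "length (fst q) \<in> {1..K}" if "q \<in> S" for q
  proof -
    obtain A B where qAB: "q = (A,B)" by fastforce
    have "(A,B) \<in> Qg V E" "set A \<subseteq> X" using that unfolding S_def Qx_def qAB by auto
    moreover then have "A \<noteq> [] \<and> distinct A" using Qg_ok[of V E] by auto
    moreover have "card (set A) \<le> K" unfolding K_def using calculation(2) finX by (intro card_mono) auto
    ultimately have "length A \<ge> 1" "length A = card (set A)" "card (set A) \<le> K"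
      by (auto simp: distinct_card Suc_le_eq)
    then show ?thesis using qAB by simp
  qed
  have Sj: "{q \<in> S. length (fst q) = Suc i} \<subseteq> sp (Suc i) ` Wall V E u (Suc i)" for i
    unfolding S_def using Qj_sub[OF u(2), of "Suc i" V E X] by simp
  have wb: "finite (Wall V E u (Suc i)) \<and> card (Wall V E u (Suc i)) \<le> 5 * 2 ^ i * D ^ (2 * i + 2)" for i
    by (rule Wall_bound[OF g d u(1) D3])
  have finS: "finite S"
  proof -
    have "S \<subseteq> (\<Union>i<K. {q \<in> S. length (fst q) = Suc i})"
    proof
      fix q assume "q \<in> S"
      then have "length (fst q) \<in> {1..K}" by (rule lenb)
      then obtain i where "length (fst q) = Suc i" "i < K" by (metis Suc_le_eq atLeastAtMost_iff not0_implies_Suc not_one_le_zero)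
      then show "q \<in> (\<Union>i<K. {q \<in> S. length (fst q) = Suc i})" using \<open>q \<in> S\<close> by blast
    qed
    moreover have "finite {q \<in> S. length (fst q) = Suc i}" for i
      using Sj[of i] wb[of i] finite_subset by blast
    ultimately show ?thesis using finite_subset by blast
  qed
  have cj: "real (card {q \<in> S. length (fst q) = Suc i}) \<le> 5 * 2 ^ i * real D ^ (2 * i + 2)" for i
  proof -
    have "card {q \<in> S. length (fst q) = Suc i} \<le> card (sp (Suc i) ` Wall V E u (Suc i))"
      using Sj[of i] wb[of i] by (intro card_mono) auto
    also have "\<dots> \<le> card (Wall V E u (Suc i))" using wb[of i] by (intro card_image_le) auto
    also have "\<dots> \<le> 5 * 2 ^ i * D ^ (2 * i + 2)" using wb[of i] by simp
    finally have "real (card {q \<in> S. length (fst q) = Suc i}) \<le> real (5 * 2 ^ i * D ^ (2 * i + 2))"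
      by (simp only: of_nat_le_iff)
    then show ?thesis by simp
  qed
  have "(\<Sum>q\<in>S. r ^ (length (fst q) - 1)) = (\<Sum>j\<in>{1..K}. \<Sum>q\<in>{q \<in> S. length (fst q) = j}. r ^ (length (fst q) - 1))"
    by (rule sum.group[symmetric]) (use finS lenb in auto)
  also have "\<dots> = (\<Sum>j\<in>{1..K}. real (card {q \<in> S. length (fst q) = j}) * r ^ (j - 1))"
    by (rule sum.cong) auto
  also have "\<dots> = (\<Sum>i<K. real (card {q \<in> S. length (fst q) = Suc i}) * r ^ i)"
    by (simp add: sum.atLeast1_atMost_eq)
  also have "\<dots> \<le> (\<Sum>i<K. 5 * (real D)\<^sup>2 * (1 / 4) ^ i)"
  proof (rule sum_mono)
    fix i
    have "real (card {q \<in> S. length (fst q) = Suc i}) * r ^ i \<le> 5 * 2 ^ i * real D ^ (2 * i + 2) * r ^ i"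
      using cj[of i] unfolding r_def by (intro mult_right_mono) auto
    also have "\<dots> = 5 * (real D)\<^sup>2 * (1 / 4) ^ i" unfolding r_def by (rule alg) (use D3 in simp)
    finally show "real (card {q \<in> S. length (fst q) = Suc i}) * r ^ i \<le> 5 * (real D)\<^sup>2 * (1 / 4) ^ i" .
  qed
  also have "\<dots> = 5 * (real D)\<^sup>2 * (\<Sum>i<K. (1 / 4) ^ i)" by (simp add: sum_distrib_left)
  also have "\<dots> \<le> 5 * (real D)\<^sup>2 * (4 / 3)"
  proof (rule mult_left_mono)
    have "(\<Sum>i<K. (1 / 4 :: real) ^ i) = (1 - (1 / 4) ^ K) / (1 - 1 / 4)" by (simp add: sum_gp_strict)
    also have "\<dots> \<le> 4 / 3" by simp
    finally show "(\<Sum>i<K. (1 / 4 :: real) ^ i) \<le> 4 / 3" .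
  qed simp
  also have "\<dots> \<le> 7 * (real D)\<^sup>2" by simp
  finally show ?thesis using finS unfolding S_def X_def r_def by simp
qed


theorem theorem20:
  fixes V :: "'a set" and E :: "'a set set" and \<Delta> :: nat
    and L :: "'a + 'a set \<Rightarrow> nat set"
  assumes "\<Delta> \<ge> 3"
    and "simple_graph V E"
    and "max_degree_le V E \<Delta>"
    and "\<forall>x\<in>elems V E. infinite (L x) \<or> real (card (L x)) \<ge> 17.9856 * (real \<Delta>)\<^sup>2"
  shows "\<exists>\<phi>. total_thue V E \<phi> \<and> (\<forall>x\<in>elems V E. \<phi> x \<in> L x)"
proof -
  define X where "X = elems V E"
  define n where "n = 15 * \<Delta>\<^sup>2"
  define \<beta> where "\<beta> = 8 * (real \<Delta>)\<^sup>2"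
  have exS: "\<exists>S. S \<subseteq> L x \<and> finite S \<and> card S = n" if x: "x \<in> X" for x
  proof (cases "finite (L x)")
    case False
    then show ?thesis using infinite_arbitrarily_large[of "L x" n] by blast
  next
    case True
    then have "real (card (L x)) \<ge> 17.9856 * (real \<Delta>)\<^sup>2" using assms(4) x unfolding X_def by auto
    moreover have "real n \<le> 17.9856 * (real \<Delta>)\<^sup>2" unfolding n_def by simp
    ultimately have "n \<le> card (L x)" by linarith
    then show ?thesis using obtain_subset_with_card_n[of n "L x"] by metis
  qed
  define Lf where "Lf x = (SOME S. S \<subseteq> L x \<and> finite S \<and> card S = n)" for x
  have Lf: "Lf x \<subseteq> L x \<and> finite (Lf x) \<and> card (Lf x) = n" if "x \<in> X" for x
    unfolding Lf_def using someI_ex[OF exS[OF that]] .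
  have finX: "finite X" unfolding X_def elems_def using assms(2) finE[OF assms(2)] unfolding simple_graph_def by simp
  have bpos: "\<beta> > 0" unfolding \<beta>_def using assms(1) by simp
  have cnt: "\<forall>x\<in>X. finite (Qx (Qg V E) X x) \<and> (\<Sum>q\<in>Qx (Qg V E) X x. (1/\<beta>) ^ (length (fst q) - 1)) \<le> real n - \<beta>"
  proof
    fix x assume "x \<in> X"
    then have "finite (Qx (Qg V E) X x) \<and>
      (\<Sum>q\<in>Qx (Qg V E) X x. (1 / (8 * (real \<Delta>)\<^sup>2)) ^ (length (fst q) - 1)) \<le> 7 * (real \<Delta>)\<^sup>2"
      using Qx_count[OF assms(2) assms(3) assms(1)] unfolding X_def by blast
    moreover have "real n - \<beta> = 7 * (real \<Delta>)\<^sup>2" unfolding n_def \<beta>_def by simp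
    ultimately show "finite (Qx (Qg V E) X x) \<and> (\<Sum>q\<in>Qx (Qg V E) X x. (1/\<beta>) ^ (length (fst q) - 1)) \<le> real n - \<beta>"
      unfolding \<beta>_def by simp
  qed
  have Lf2: "\<forall>x\<in>X. finite (Lf x) \<and> card (Lf x) = n" using Lf by blast
  obtain f where f: "f \<in> PiE X Lf" "goodc (Qg V E) X f"
    using rosenfeld[OF finX Lf2 Qg_ok bpos cnt] by blast
  have g2: "goodc (Qg V E) (elems V E) f" using f(2) unfolding X_def .
  have "total_thue V E f" by (rule good_thue[OF g2])
  moreover have "\<forall>x\<in>elems V E. f x \<in> L x"
  proof
    fix x assume x: "x \<in> elems V E"
    then have "f x \<in> Lf x" using f(1) unfolding X_def by (auto simp: PiE_def Pi_def)
    then show "f x \<in> L x" using Lf[of x] x unfolding X_def by blast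
  qed
  ultimately show ?thesis by blast
qed

end
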